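(* For every positive integer $n$, the set $[n]=\{1,\dots,n\}$ admits exactly one $2$-good partition.
   Context: For integers $n>0$ and $m>1$, a partition of $[n]=\{1,\dots,n\}$ into nonempty parts is called $m$-good if every part has at most $m$ elements and the sum of the elements of every part is a power of $m$, i.e. equals $m^s$ for some integer $s\ge 0$. Thus a $2$-good partition is a partition of $[n]$ into parts of size $1$ or $2$, each with sum a power of $2$. *)

theory Defs
  imports Main "HOL-Library.Disjoint_Sets"
begin

definition good_partition :: "nat \<Rightarrow> nat \<Rightarrow> nat set set \<Rightarrow> bool" where
  "good_partition m n P \<longleftrightarrow>
     partition_on {1..n} P \<and>
     (\<forall>B\<in>P. card B \<le> m \<and> (\<exists>s::nat. \<Sum>B = m ^ s))"

end

theory Submission imports Defs begin

lemma block_shape: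
  assumes "B \<subseteq> {1..(n::nat)}" "B \<noteq> {}" "card B \<le> 2" "\<Sum>B = 2^s"
  shows "B = {Max B} \<or> (\<exists>z. 0 < z \<and> z < Max B \<and> B = {Max B, z} \<and> Max B + z = 2^s)"
proof -
  have fin: "finite B" using assms(1) finite_subset by blast
  hence "card B \<noteq> 0" using assms(2) by simp
  hence "card B = 1 \<or> card B = 2" using assms(3) by linarith
  thus ?thesis
  proof
    assume "card B = 1" then obtain a where "B = {a}" using card_1_singletonE by blast
    thus ?thesis by simp
  next
    assume "card B = 2" then obtain a b where ab: "B = {a,b}" "a \<noteq> b" using card_2_iff by metis
    have pos: "a > 0" "b > 0" using assms(1) ab by auto
    show ?thesis
    proof (cases "a < b")
      case True
      hence "Max B = b" using ab by (simp add: max_def)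
      thus ?thesis using ab True pos assms(4) by auto
    next
      case False
      hence "Max B = a" using ab by (simp add: max_def)
      thus ?thesis using ab False pos assms(4) by auto
    qed
  qed
qed

lemma pow_between:
  assumes "(2::nat)^s < 2^t" "(2::nat)^t < 2 * 2^s"
  shows False
proof -
  have "s < t" using assms(1) by (simp add: power_strict_increasing_iff)
  moreover have "t < Suc s" using assms(2) power_strict_increasing_iff[of "2::nat" t "Suc s"] by simp
  ultimately show False by simp
qed

lemma pow_eq:
  assumes "(x::nat) < 2^s" "(2::nat)^s < 2*x" "x < 2^t" "(2::nat)^t < 2*x"
  shows "s = t"
proof -
  have "s < Suc t" using assms power_strict_increasing_iff[of "2::nat" s "Suc t"] by simp
  moreover have "t < Suc s" using assms power_strict_increasing_iff[of "2::nat" t "Suc s"] by simp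
  ultimately show ?thesis by simp
qed

lemma good_block:
  assumes "good_partition 2 n P" "B \<in> P"
  shows "B \<subseteq> {1..n}" "B \<noteq> {}" "card B \<le> 2" "\<exists>s. \<Sum>B = 2^s"
  using assms unfolding good_partition_def partition_on_def by auto

lemma same_max:
  assumes "good_partition 2 n P" "B \<in> P" "good_partition 2 n P'" "B' \<in> P'" "Max B = Max B'"
  shows "B = B'"
proof -
  obtain s where s: "\<Sum>B = 2^s" using good_block(4)[OF assms(1,2)] by blast
  obtain t where t: "\<Sum>B' = 2^t" using good_block(4)[OF assms(3,4)] by blast
  note h1 = block_shape[OF good_block(1-3)[OF assms(1,2)] s]
  note h2 = block_shape[OF good_block(1-3)[OF assms(3,4)] t]
  define x where "x = Max B"
  have xB': "x = Max B'" using assms(5) x_def by simp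
  show ?thesis
  proof (cases "B = {x}")
    case True
    hence "x = 2^s" using s by simp
    show ?thesis
    proof (cases "B' = {x}")
      case True then show ?thesis using \<open>B = {x}\<close> by simp
    next
      case False
      then obtain z where "0 < z" "z < x" "B' = {x,z}" "x + z = 2^t" using h2 xB' by blast
      hence "(2::nat)^s < 2^t" "(2::nat)^t < 2 * 2^s" using \<open>x = 2^s\<close> by linarith+
      hence False using pow_between[of s t] by blast
      thus ?thesis ..
    qed
  next
    case False
    then obtain z where z: "0 < z" "z < x" "B = {x,z}" "x + z = 2^s" using h1 x_def by blast
    show ?thesis
    proof (cases "B' = {x}")
      case True
      hence "x = 2^t" using t by simp
      have "(2::nat)^t < 2^s" "(2::nat)^s < 2 * 2^t" using z(1,2,4) \<open>x = 2^t\<close> by linarith+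
      hence False using pow_between[of t s] by blast
      thus ?thesis ..
    next
      case False
      then obtain w where w: "0 < w" "w < x" "B' = {x,w}" "x + w = 2^t" using h2 xB' by blast
      have "x < 2^s" "(2::nat)^s < 2*x" "x < 2^t" "(2::nat)^t < 2*x" using z(1,2,4) w(1,2,4) by linarith+
      hence "s = t" by (rule pow_eq)
      thus ?thesis using z w by auto
    qed
  qed
qed

lemma part_same:
  assumes "good_partition 2 n P" "B \<in> P" "B' \<in> P" "x \<in> B" "x \<in> B'"
  shows "B = B'"
proof -
  have "disjoint P" using assms(1) unfolding good_partition_def partition_on_def by blast
  thus ?thesis using assms(2-5) disjointD by blast
qed

lemma part_cover:
  assumes "good_partition 2 n P" "y \<in> {1..n}"
  obtains B where "B \<in> P" "y \<in> B"
  using assms unfolding good_partition_def partition_on_def by blast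

lemma uniq_aux:
  assumes P1: "good_partition 2 n P1" and P2: "good_partition 2 n P2"
  shows "x \<in> {1..n} \<Longrightarrow> B1 \<in> P1 \<Longrightarrow> B2 \<in> P2 \<Longrightarrow> x \<in> B1 \<Longrightarrow> x \<in> B2 \<Longrightarrow> B1 = B2"
proof (induction "n - x" arbitrary: x B1 B2 rule: less_induct)
  case less
  have sub1: "B1 \<subseteq> {1..n}" using good_block(1)[OF P1 less.prems(2)] .
  have sub2: "B2 \<subseteq> {1..n}" using good_block(1)[OF P2 less.prems(3)] .
  show ?case
  proof (cases "\<exists>y\<in>B1. y > x")
    case True
    then obtain y where y: "y \<in> B1" "y > x" by blast
    have yn: "y \<in> {1..n}" using y sub1 by blast
    obtain B2' where B2': "B2' \<in> P2" "y \<in> B2'" using part_cover[OF P2 yn] by blast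
    have "n - y < n - x" using y yn by auto
    hence "B1 = B2'" using less.hyps[of y B1 B2'] yn y B2' less.prems by blast
    hence "x \<in> B2'" using less.prems by simp
    thus ?thesis using part_same[OF P2 B2'(1) less.prems(3)] less.prems \<open>B1 = B2'\<close> by blast
  next
    case False
    note F1 = False
    show ?thesis
    proof (cases "\<exists>y\<in>B2. y > x")
      case True
      then obtain y where y: "y \<in> B2" "y > x" by blast
      have yn: "y \<in> {1..n}" using y sub2 by blast
      obtain B1' where B1': "B1' \<in> P1" "y \<in> B1'" using part_cover[OF P1 yn] by blast
      have "n - y < n - x" using y yn by auto
      hence "B1' = B2" using less.hyps[of y B1' B2] yn y B1' less.prems by blast
      hence "x \<in> B1'" using less.prems by simp
      thus ?thesis using part_same[OF P1 B1'(1) less.prems(2)] less.prems \<open>B1' = B2\<close> by blast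
    next
      case False
      have f1: "finite B1" using sub1 finite_subset by blast
      have f2: "finite B2" using sub2 finite_subset by blast
      have m1: "Max B1 = x" using F1 f1 less.prems(4) by (meson Max_eqI not_le)
      have m2: "Max B2 = x" using False f2 less.prems(5) by (meson Max_eqI not_le)
      show ?thesis using same_max[OF P1 less.prems(2) P2 less.prems(3)] m1 m2 by simp
    qed
  qed
qed

lemma uniq:
  assumes P1: "good_partition 2 n P1" and P2: "good_partition 2 n P2"
  shows "P1 \<subseteq> P2"
proof
  fix B assume B: "B \<in> P1"
  obtain x where x: "x \<in> B" using good_block(2)[OF P1 B] by blast
  have xn: "x \<in> {1..n}" using good_block(1)[OF P1 B] x by blast
  obtain B' where B': "B' \<in> P2" "x \<in> B'" using part_cover[OF P2 xn] by blast
  have "B = B'" using uniq_aux[OF P1 P2 xn B B'(1) x B'(2)] .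
  thus "B \<in> P2" using B' by simp
qed

lemma exist: "\<exists>P. good_partition 2 n P"
proof (induction n rule: less_induct)
  case (less n)
  show ?case
  proof (cases "n = 0")
    case True
    thus ?thesis unfolding good_partition_def by (intro exI[of _ "{}"]) (simp add: partition_on_empty)
  next
    case False
    then obtain k where k: "2^k \<le> n" "n < 2^(k+1)" using ex_power_ivl1[of 2 n] by auto
    define h :: nat where "h = 2^k"
    define c :: nat where "c = 2*h"
    define b where "b = c - n"
    have hn: "h \<le> n" "n < c" using k h_def c_def by auto
    have b1: "1 \<le> b" "b \<le> h" using hn b_def c_def by auto
    obtain P' where P': "good_partition 2 (b-1) P'" using less b1 hn by (meson diff_less le_trans less_numeral_extra(1) less_le_trans)
    define Q where "Q = (\<lambda>j. {j, c-j}) ` {b..n}"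
    have UQ: "\<Union>Q = {b..n}" unfolding Q_def using hn b_def by auto
    have UP': "\<Union>P' = {1..b-1}" using P' unfolding good_partition_def partition_on_def by blast
    have dQ: "disjoint Q"
    proof (rule disjointI)
      fix A B assume "A \<in> Q" "B \<in> Q" "A \<noteq> B"
      then obtain i j where ij: "A = {i, c-i}" "B = {j, c-j}" "i \<in> {b..n}" "j \<in> {b..n}" unfolding Q_def by blast
      show "A \<inter> B = {}"
      proof (rule ccontr)
        assume "A \<inter> B \<noteq> {}"
        hence "i = j \<or> i = c - j \<or> c - i = j \<or> c - i = c - j" using ij by auto
        hence "A = B" using ij hn by auto
        thus False using \<open>A \<noteq> B\<close> by simp
      qed
    qed
    have dP': "disjoint P'" using P' unfolding good_partition_def partition_on_def by blast
    have disj: "disjoint (Q \<union> P')"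
      by (rule disjoint_union[OF dQ dP']) (use UQ UP' in auto)
    have neQ: "{} \<notin> Q" unfolding Q_def by auto
    have neP': "{} \<notin> P'" using P' unfolding good_partition_def partition_on_def by blast
    have blocksQ: "\<forall>B\<in>Q. card B \<le> 2 \<and> (\<exists>s::nat. \<Sum>B = 2 ^ s)"
    proof
      fix B assume "B \<in> Q"
      then obtain j where j: "B = {j, c-j}" "j \<in> {b..n}" unfolding Q_def by blast
      have "card B \<le> 2" using j(1) by (simp add: card_insert_le_m1)
      moreover have "\<exists>s::nat. \<Sum>B = 2 ^ s"
      proof (cases "j = c - j")
        case True
        hence "j = h" using c_def by simp
        thus ?thesis using j(1) True h_def by auto
      next
        case False
        hence "\<Sum>B = c" using j hn by simp
        thus ?thesis using c_def h_def by (metis power_Suc)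
      qed
      ultimately show "card B \<le> 2 \<and> (\<exists>s::nat. \<Sum>B = 2 ^ s)" by blast
    qed
    have blocksP': "\<forall>B\<in>P'. card B \<le> 2 \<and> (\<exists>s::nat. \<Sum>B = 2 ^ s)"
      using P' unfolding good_partition_def by blast
    have "\<Union>(Q \<union> P') = {1..n}" using UQ UP' b1 hn by auto
    hence "good_partition 2 n (Q \<union> P')"
      unfolding good_partition_def partition_on_def using disj neQ neP' blocksQ blocksP' by blast
    thus ?thesis by blast
  qed
qed

theorem mainTheorem3:
  fixes n :: nat
  assumes "n > 0"
  shows "\<exists>!P. good_partition 2 n P"
  using exist uniq by (metis subset_antisym)

end
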